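(* Let $\gamma>0$. Let $(\mathbf{x},\mathbf{u})$ have joint density $p(\mathbf{x},\mathbf{u})=(1-\epsilon(\mathbf{u}))p^{\star}(\mathbf{x},\mathbf{u})+\epsilon(\mathbf{u})\delta(\mathbf{x},\mathbf{u})$ with marginals $p(\mathbf{x})$, $p(\mathbf{u})$, and let a binary label $y\in\{0,1\}$ satisfy $p(y=0)=p(y=1)=\tfrac12$, $p(\mathbf{x},\mathbf{u}|y=1)=p(\mathbf{x},\mathbf{u})$ and $p(\mathbf{x},\mathbf{u}|y=0)=p(\mathbf{x})p(\mathbf{u})$. For a positive function $r(\mathbf{x},\mathbf{u})$ define the $\gamma$-cross entropy $$d_\gamma(p(y|\mathbf{x},\mathbf{u}),r(\mathbf{x},\mathbf{u});p(\mathbf{x},\mathbf{u})):=-\frac{1}{\gamma}\log\iint\sum_{y=0}^{1}\left\{\frac{r(\mathbf{x},\mathbf{u})^{y(\gamma+1)}}{1+r(\mathbf{x},\mathbf{u})^{\gamma+1}}\right\}^{\frac{\gamma}{\gamma+1}}p(y,\mathbf{x},\mathbf{u})\,d\mathbf{x}\,d\mathbf{u},$$ and let $$\nu:=\iint\left\{\frac{r(\mathbf{x},\mathbf{u})^{\gamma+1}}{1+r(\mathbf{x},\mathbf{u})^{\gamma+1}}\right\}^{\frac{\gamma}{\gamma+1}}\epsilon(\mathbf{u})\delta(\mathbf{x},\mathbf{u})\,d\mathbf{x}\,d\mathbf{u}.$$ Assume $\nu$ is sufficiently small. Then $$d_\gamma(p(y|\mathbf{x},\mathbf{u}),r(\mathbf{x},\mathbf{u});p(\mathbf{x},\mathbf{u}))=J[r]+O(\nu),$$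 where $$J[r]:=-\frac{1}{\gamma}\log\left[\frac12\iint\left\{\frac{1}{1+r(\mathbf{x},\mathbf{u})^{\gamma+1}}\right\}^{\frac{\gamma}{\gamma+1}}p(\mathbf{x})p(\mathbf{u})\,d\mathbf{x}\,d\mathbf{u}+\frac12\iint\left\{\frac{r(\mathbf{x},\mathbf{u})^{\gamma+1}}{1+r(\mathbf{x},\mathbf{u})^{\gamma+1}}\right\}^{\frac{\gamma}{\gamma+1}}(1-\epsilon(\mathbf{u}))p^{\star}(\mathbf{x},\mathbf{u})\,d\mathbf{x}\,d\mathbf{u}\right].$$ Furthermore, if $p(\mathbf{x})$, $p(\mathbf{u})$ and $r(\mathbf{x},\mathbf{u})$ are positive for all $\mathbf{x},\mathbf{u}$, then $J[r]$ is minimized at $$r^{\star}(\mathbf{x},\mathbf{u})=\frac{(1-\epsilon(\mathbf{u}))p^{\star}(\mathbf{x}|\mathbf{u})}{p(\mathbf{x})}.$$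
   Context: Here $p^{\star}(\mathbf{x},\mathbf{u})=p^{\star}(\mathbf{x}|\mathbf{u})p(\mathbf{u})$ is the target (noncontaminated) joint density, $\delta(\mathbf{x},\mathbf{u})=\delta(\mathbf{x}|\mathbf{u})p(\mathbf{u})$ is an outlier density, and $\epsilon(\mathbf{u})\in[0,1)$ is a contamination ratio that may depend on $\mathbf{u}$ (it is not assumed small). $p(\mathbf{x})=\int p(\mathbf{x}|\mathbf{u})p(\mathbf{u})d\mathbf{u}$ is the contaminated marginal. $p(y,\mathbf{x},\mathbf{u})=p(\mathbf{x},\mathbf{u}|y)p(y)$. $O(\nu)$ denotes a term bounded by a constant times $\nu$ as $\nu\to0$. *)

theory Defs
  imports "HOL-Analysis.Analysis"
begin

text \<open>The data x ranges over the measure space Mx, the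
  covariate u over Mu; all densities are w.r.t. these reference measures.
  pu = p(u); ps x u = p*(x|u); dl x u = delta(x|u); eps u = epsilon(u).\<close>

definition is_density :: "'b measure \<Rightarrow> ('b \<Rightarrow> real) \<Rightarrow> bool" where
  "is_density M f \<longleftrightarrow> f \<in> borel_measurable M \<and> (\<forall>z\<in>space M. 0 \<le> f z)
     \<and> integrable M f \<and> integral\<^sup>L M f = 1"

definition is_cond_density :: "'a measure \<Rightarrow> 'b measure \<Rightarrow> ('a \<Rightarrow> 'b \<Rightarrow> real) \<Rightarrow> bool" where
  "is_cond_density Mx Mu q \<longleftrightarrow> (\<lambda>(x, u). q x u) \<in> borel_measurable (Mx \<Otimes>\<^sub>M Mu)
     \<and> (\<forall>x\<in>space Mx. \<forall>u\<in>space Mu. 0 \<le> q x u)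
     \<and> (\<forall>u\<in>space Mu. integrable Mx (\<lambda>x. q x u) \<and> (\<integral>x. q x u \<partial>Mx) = 1)"

definition contam_model :: "'a measure \<Rightarrow> 'b measure \<Rightarrow> ('b \<Rightarrow> real) \<Rightarrow> ('b \<Rightarrow> real)
    \<Rightarrow> ('a \<Rightarrow> 'b \<Rightarrow> real) \<Rightarrow> ('a \<Rightarrow> 'b \<Rightarrow> real) \<Rightarrow> bool" where
  "contam_model Mx Mu pu eps ps dl \<longleftrightarrow>
     sigma_finite_measure Mx \<and> sigma_finite_measure Mu \<and> is_density Mu pu
     \<and> is_cond_density Mx Mu ps \<and> is_cond_density Mx Mu dl
     \<and> eps \<in> borel_measurable Mu \<and> (\<forall>u\<in>space Mu. 0 \<le> eps u \<and> eps u < 1)"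

definition pjoint :: "('b \<Rightarrow> real) \<Rightarrow> ('b \<Rightarrow> real) \<Rightarrow> ('a \<Rightarrow> 'b \<Rightarrow> real) \<Rightarrow> ('a \<Rightarrow> 'b \<Rightarrow> real)
    \<Rightarrow> 'a \<Rightarrow> 'b \<Rightarrow> real" where
  "pjoint pu eps ps dl x u = (1 - eps u) * (ps x u * pu u) + eps u * (dl x u * pu u)"

definition pmarg :: "'b measure \<Rightarrow> ('b \<Rightarrow> real) \<Rightarrow> ('b \<Rightarrow> real) \<Rightarrow> ('a \<Rightarrow> 'b \<Rightarrow> real)
    \<Rightarrow> ('a \<Rightarrow> 'b \<Rightarrow> real) \<Rightarrow> 'a \<Rightarrow> real" where
  "pmarg Mu pu eps ps dl x = (\<integral>u. pjoint pu eps ps dl x u \<partial>Mu)"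

text \<open>p(y,x,u) = p(x,u|y) p(y) with p(y=0)=p(y=1)=1/2, p(x,u|y=1)=p(x,u),
  p(x,u|y=0)=p(x)p(u).\<close>
definition pyxu :: "'b measure \<Rightarrow> ('b \<Rightarrow> real) \<Rightarrow> ('b \<Rightarrow> real) \<Rightarrow> ('a \<Rightarrow> 'b \<Rightarrow> real)
    \<Rightarrow> ('a \<Rightarrow> 'b \<Rightarrow> real) \<Rightarrow> nat \<Rightarrow> 'a \<Rightarrow> 'b \<Rightarrow> real" where
  "pyxu Mu pu eps ps dl y x u =
     (if y = 1 then 1/2 * pjoint pu eps ps dl x u
      else 1/2 * (pmarg Mu pu eps ps dl x * pu u))"

definition dgamma :: "real \<Rightarrow> 'a measure \<Rightarrow> 'b measure \<Rightarrow> ('b \<Rightarrow> real) \<Rightarrow> ('b \<Rightarrow> real)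
    \<Rightarrow> ('a \<Rightarrow> 'b \<Rightarrow> real) \<Rightarrow> ('a \<Rightarrow> 'b \<Rightarrow> real) \<Rightarrow> ('a \<Rightarrow> 'b \<Rightarrow> real) \<Rightarrow> real" where
  "dgamma \<gamma> Mx Mu pu eps ps dl r =
     - (1/\<gamma>) * ln (\<integral>(x, u). (\<Sum>y\<in>{0, 1::nat}.
         ((r x u powr (real y * (\<gamma> + 1))) / (1 + r x u powr (\<gamma> + 1))) powr (\<gamma> / (\<gamma> + 1))
         * pyxu Mu pu eps ps dl y x u) \<partial>(Mx \<Otimes>\<^sub>M Mu))"

definition nu_contam :: "real \<Rightarrow> 'a measure \<Rightarrow> 'b measure \<Rightarrow> ('b \<Rightarrow> real) \<Rightarrow> ('b \<Rightarrow> real)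
    \<Rightarrow> ('a \<Rightarrow> 'b \<Rightarrow> real) \<Rightarrow> ('a \<Rightarrow> 'b \<Rightarrow> real) \<Rightarrow> real" where
  "nu_contam \<gamma> Mx Mu pu eps dl r =
     (\<integral>(x, u). ((r x u powr (\<gamma> + 1)) / (1 + r x u powr (\<gamma> + 1))) powr (\<gamma> / (\<gamma> + 1))
         * eps u * (dl x u * pu u) \<partial>(Mx \<Otimes>\<^sub>M Mu))"

definition Jarg :: "real \<Rightarrow> 'a measure \<Rightarrow> 'b measure \<Rightarrow> ('b \<Rightarrow> real) \<Rightarrow> ('b \<Rightarrow> real)
    \<Rightarrow> ('a \<Rightarrow> 'b \<Rightarrow> real) \<Rightarrow> ('a \<Rightarrow> 'b \<Rightarrow> real) \<Rightarrow> ('a \<Rightarrow> 'b \<Rightarrow> real) \<Rightarrow> real" where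
  "Jarg \<gamma> Mx Mu pu eps ps dl r =
     1/2 * (\<integral>(x, u). (1 / (1 + r x u powr (\<gamma> + 1))) powr (\<gamma> / (\<gamma> + 1))
         * (pmarg Mu pu eps ps dl x * pu u) \<partial>(Mx \<Otimes>\<^sub>M Mu))
   + 1/2 * (\<integral>(x, u). ((r x u powr (\<gamma> + 1)) / (1 + r x u powr (\<gamma> + 1))) powr (\<gamma> / (\<gamma> + 1))
         * ((1 - eps u) * (ps x u * pu u)) \<partial>(Mx \<Otimes>\<^sub>M Mu))"

definition Jfun :: "real \<Rightarrow> 'a measure \<Rightarrow> 'b measure \<Rightarrow> ('b \<Rightarrow> real) \<Rightarrow> ('b \<Rightarrow> real)
    \<Rightarrow> ('a \<Rightarrow> 'b \<Rightarrow> real) \<Rightarrow> ('a \<Rightarrow> 'b \<Rightarrow> real) \<Rightarrow> ('a \<Rightarrow> 'b \<Rightarrow> real) \<Rightarrow> real" where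
  "Jfun \<gamma> Mx Mu pu eps ps dl r = - (1/\<gamma>) * ln (Jarg \<gamma> Mx Mu pu eps ps dl r)"

definition rstar :: "'b measure \<Rightarrow> ('b \<Rightarrow> real) \<Rightarrow> ('b \<Rightarrow> real) \<Rightarrow> ('a \<Rightarrow> 'b \<Rightarrow> real)
    \<Rightarrow> ('a \<Rightarrow> 'b \<Rightarrow> real) \<Rightarrow> 'a \<Rightarrow> 'b \<Rightarrow> real" where
  "rstar Mu pu eps ps dl x u = (1 - eps u) * ps x u / pmarg Mu pu eps ps dl x"

end

theory Submission
  imports Defs
begin


lemma prod_integrable:
  fixes f :: "'a \<Rightarrow> real" and g :: "'b \<Rightarrow> real"
  assumes sx: "sigma_finite_measure Mx" and su: "sigma_finite_measure Mu"
    and fi: "integrable Mx f" and gi: "integrable Mu g"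
    and fn: "\<forall>x\<in>space Mx. 0 \<le> f x" and gn: "\<forall>u\<in>space Mu. 0 \<le> g u"
  shows "integrable (Mx \<Otimes>\<^sub>M Mu) (\<lambda>(x, u). f x * g u)"
proof -
  interpret pair_sigma_finite Mx Mu using sx su by (simp add: pair_sigma_finite_def)
  have fm[measurable]: "f \<in> borel_measurable Mx" using fi by auto
  have gm[measurable]: "g \<in> borel_measurable Mu" using gi by auto
  have "(\<integral>\<^sup>+ z. ennreal ((\<lambda>(x, u). f x * g u) z) \<partial>(Mx \<Otimes>\<^sub>M Mu))
      = (\<integral>\<^sup>+ x. \<integral>\<^sup>+ u. ennreal (f x * g u) \<partial>Mu \<partial>Mx)"
    by (subst M2.nn_integral_fst[symmetric]) auto
  also have "\<dots> = (\<integral>\<^sup>+ x. ennreal (f x) * (\<integral>\<^sup>+ u. ennreal (g u) \<partial>Mu) \<partial>Mx)"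
    apply (rule nn_integral_cong)
    apply (subst nn_integral_cmult[symmetric])
     apply simp
    apply (rule nn_integral_cong)
    using fn gn by (simp add: ennreal_mult)
  also have "\<dots> = (\<integral>\<^sup>+ x. ennreal (f x) \<partial>Mx) * (\<integral>\<^sup>+ u. ennreal (g u) \<partial>Mu)"
    by (rule nn_integral_multc) simp
  also have "\<dots> < \<infinity>"
    using fi gi fn gn
    by (simp add: nn_integral_eq_integral AE_I2 ennreal_mult_less_top)
  finally show ?thesis
    using fn gn by (intro integrableI_nonneg) (auto intro!: AE_I2 simp: space_pair_measure)
qed

lemma cond_integrable:
  fixes q :: "'a \<Rightarrow> 'b \<Rightarrow> real"
  assumes sx: "sigma_finite_measure Mx" and su: "sigma_finite_measure Mu"
    and q: "is_cond_density Mx Mu q" and p: "is_density Mu pu"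
  shows "integrable (Mx \<Otimes>\<^sub>M Mu) (\<lambda>(x, u). q x u * pu u)"
proof -
  interpret pair_sigma_finite Mx Mu using sx su by (simp add: pair_sigma_finite_def)
  have qm[measurable]: "(\<lambda>(x, u). q x u) \<in> borel_measurable (Mx \<Otimes>\<^sub>M Mu)"
    using q by (simp add: is_cond_density_def)
  have pm[measurable]: "pu \<in> borel_measurable Mu" using p by (simp add: is_density_def)
  have qn: "\<forall>x\<in>space Mx. \<forall>u\<in>space Mu. 0 \<le> q x u" using q by (simp add: is_cond_density_def)
  have pn: "\<forall>u\<in>space Mu. 0 \<le> pu u" using p by (simp add: is_density_def)
  have qi: "\<And>u. u \<in> space Mu \<Longrightarrow> (\<integral>\<^sup>+ x. ennreal (q x u) \<partial>Mx) = 1"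
    using q qn by (subst nn_integral_eq_integral) (auto intro!: AE_I2 simp: is_cond_density_def)
  have "(\<integral>\<^sup>+ z. ennreal ((\<lambda>(x, u). q x u * pu u) z) \<partial>(Mx \<Otimes>\<^sub>M Mu))
      = (\<integral>\<^sup>+ u. \<integral>\<^sup>+ x. ennreal (q x u * pu u) \<partial>Mx \<partial>Mu)"
    by (subst nn_integral_snd[symmetric]) auto
  also have "\<dots> = (\<integral>\<^sup>+ u. ennreal (pu u) \<partial>Mu)"
  proof (rule nn_integral_cong)
    fix u assume u: "u \<in> space Mu"
    have m: "(\<lambda>x. q x u) \<in> borel_measurable Mx"
      using q u by (auto simp: is_cond_density_def)
    have "(\<integral>\<^sup>+ x. ennreal (q x u * pu u) \<partial>Mx) = (\<integral>\<^sup>+ x. ennreal (q x u) * ennreal (pu u) \<partial>Mx)"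
      using u qn pn by (intro nn_integral_cong) (simp add: ennreal_mult)
    also have "\<dots> = (\<integral>\<^sup>+ x. ennreal (q x u) \<partial>Mx) * ennreal (pu u)"
      using m by (intro nn_integral_multc) simp
    finally show "(\<integral>\<^sup>+ x. ennreal (q x u * pu u) \<partial>Mx) = ennreal (pu u)"
      using qi[OF u] by simp
  qed
  also have "\<dots> < \<infinity>"
    using p pn by (simp add: nn_integral_eq_integral AE_I2 is_density_def)
  finally show ?thesis
    using qn pn by (intro integrableI_nonneg) (auto intro!: AE_I2 simp: space_pair_measure)
qed



lemma pw_upper:
  fixes A B R g :: real
  assumes g: "g > 0" and A: "A > 0" and B: "B \<ge> 0" and R: "R \<ge> 0"
  shows "(1 / (1 + R)) powr (g / (g + 1)) * A + (R / (1 + R)) powr (g / (g + 1)) * B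
         \<le> (A powr (g + 1) + B powr (g + 1)) powr (1 / (g + 1))"
proof -
  define p where "p = g + 1"
  define S where "S = A powr p + B powr p"
  define M where "M = S powr (1 / p)"
  define t where "t = 1 / (1 + R)"
  define s where "s = R / (1 + R)"
  have p1: "p > 1" using g by (simp add: p_def)
  have Sp: "S > 0" using A B by (simp add: S_def add_pos_nonneg)
  have Mp: "M > 0" using Sp by (simp add: M_def)
  have MpS: "M powr p = S" using Sp p1 by (simp add: M_def powr_powr)
  have bet: "g / (g + 1) = 1 - 1/p" using g by (simp add: p_def field_simps)
  have tp: "t > 0" using R by (simp add: t_def)
  have sn: "s \<ge> 0" using R by (simp add: s_def)
  have st: "s + t = 1" using R by (simp add: s_def t_def field_simps)
  have key: "C * x powr (1 - 1/p) \<le> M * ((1/p) * (C/M) powr p + (1 - 1/p) * x)"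
    if C: "C \<ge> 0" and x: "x \<ge> 0" for C x
  proof (cases "C = 0 \<or> x = 0")
    case True
    then show ?thesis using Mp p1 C x
      by (auto intro!: mult_nonneg_nonneg add_nonneg_nonneg)
  next
    case False
    then have Cp: "C > 0" and xp: "x > 0" using C x by auto
    have "((C/M) powr p) powr (1/p) * x powr (1 - 1/p) \<le> (1/p) * (C/M) powr p + (1 - 1/p) * x"
      using p1 Cp xp Mp by (intro Youngs_inequality_0) auto
    moreover have "((C/M) powr p) powr (1/p) = C / M"
      using p1 Cp Mp by (simp add: powr_powr)
    ultimately have "C / M * x powr (1 - 1/p) \<le> (1/p) * (C/M) powr p + (1 - 1/p) * x" by simp
    then have i: "M * (C / M * x powr (1 - 1/p)) \<le> M * ((1/p) * (C/M) powr p + (1 - 1/p) * x)"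
      using Mp by (intro mult_left_mono) auto
    have e: "M * (C / M * x powr (1 - 1/p)) = C * x powr (1 - 1/p)" using Mp by simp
    show ?thesis using i e by linarith
  qed
  have "t powr (1 - 1/p) * A + s powr (1 - 1/p) * B
        \<le> M * ((1/p) * (A/M) powr p + (1 - 1/p) * t) + M * ((1/p) * (B/M) powr p + (1 - 1/p) * s)"
    using key[of A t] key[of B s] A B tp sn by (simp add: mult.commute)
  also have "\<dots> = M * ((1/p) * ((A powr p + B powr p) / M powr p) + (1 - 1/p) * (s + t))"
    using Mp A B p1 by (simp add: powr_divide field_simps)
  also have "\<dots> = M"
    using st MpS Sp by (simp add: S_def[symmetric])
  finally show ?thesis
    by (simp add: bet t_def s_def M_def S_def p_def)
qed

lemma pw_star:
  fixes A B g :: real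
  assumes g: "g > 0" and A: "A > 0" and B: "B \<ge> 0"
  shows "(1 / (1 + (B/A) powr (g + 1))) powr (g / (g + 1)) * A
       + ((B/A) powr (g + 1) / (1 + (B/A) powr (g + 1))) powr (g / (g + 1)) * B
         = (A powr (g + 1) + B powr (g + 1)) powr (1 / (g + 1))"
proof -
  define p where "p = g + 1"
  define S where "S = A powr p + B powr p"
  have p1: "p > 1" using g by (simp add: p_def)
  have Sp: "S > 0" using A B by (simp add: S_def add_pos_nonneg)
  have Ap: "A powr p > 0" using A by simp
  have bet: "g / (g + 1) = 1 - 1/p" using g by (simp add: p_def field_simps)
  have bet': "g / p = 1 - 1/p" using g by (simp add: p_def field_simps)
  have e1: "1 / (1 + (B/A) powr p) = A powr p / S"
    using A B Ap by (simp add: S_def powr_divide field_simps)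
  have e2: "(B/A) powr p / (1 + (B/A) powr p) = B powr p / S"
    using A B Ap by (simp add: S_def powr_divide field_simps)
  have a1: "(A powr p / S) powr (1 - 1/p) * A = A powr p / S powr (1 - 1/p)"
  proof -
    have "(A powr p / S) powr (1 - 1/p) * A = A powr (p * (1 - 1/p)) / S powr (1 - 1/p) * A powr 1"
      using A Sp by (simp add: powr_divide powr_powr)
    also have "\<dots> = A powr (p * (1 - 1/p) + 1) / S powr (1 - 1/p)"
      using A by (simp add: powr_add)
    also have "p * (1 - 1/p) + 1 = p" using p1 by (simp add: field_simps)
    finally show ?thesis .
  qed
  have b1: "(B powr p / S) powr (1 - 1/p) * B = B powr p / S powr (1 - 1/p)"
  proof (cases "B = 0")
    case True then show ?thesis by simp
  next
    case False
    then have Bp: "B > 0" using B by simp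
    have "(B powr p / S) powr (1 - 1/p) * B = B powr (p * (1 - 1/p)) / S powr (1 - 1/p) * B powr 1"
      using Bp Sp by (simp add: powr_divide powr_powr)
    also have "\<dots> = B powr (p * (1 - 1/p) + 1) / S powr (1 - 1/p)"
      using Bp by (simp add: powr_add)
    also have "p * (1 - 1/p) + 1 = p" using p1 by (simp add: field_simps)
    finally show ?thesis .
  qed
  have "A powr p / S powr (1 - 1/p) + B powr p / S powr (1 - 1/p) = S / S powr (1 - 1/p)"
    by (simp add: S_def add_divide_distrib)
  also have "\<dots> = S powr 1 / S powr (1 - 1/p)" using Sp by simp
  also have "\<dots> = S powr (1 - (1 - 1/p))" by (rule powr_diff[symmetric])
  also have "\<dots> = S powr (1/p)" by simp
  finally have "A powr p / S powr (1 - 1/p) + B powr p / S powr (1 - 1/p) = S powr (1/p)" .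
  then show ?thesis
    using a1 b1 e1 e2 p1 by (simp add: bet' S_def p_def[symmetric])
qed


lemma bf2:
  fixes F H :: "'a \<Rightarrow> 'b \<Rightarrow> real"
  assumes "integrable (Mx \<Otimes>\<^sub>M Mu) (\<lambda>(x, u). F x u)"
    and [measurable]: "(\<lambda>(x, u). H x u) \<in> borel_measurable (Mx \<Otimes>\<^sub>M Mu)"
    and b: "\<forall>x\<in>space Mx. \<forall>u\<in>space Mu. \<bar>H x u\<bar> \<le> 1"
  shows "integrable (Mx \<Otimes>\<^sub>M Mu) (\<lambda>(x, u). H x u * F x u)"
proof (rule Bochner_Integration.integrable_bound[OF assms(1)])
  have [measurable]: "(\<lambda>(x, u). F x u) \<in> borel_measurable (Mx \<Otimes>\<^sub>M Mu)" using assms(1) by auto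
  show "(\<lambda>(x, u). H x u * F x u) \<in> borel_measurable (Mx \<Otimes>\<^sub>M Mu)" by measurable
  show "AE z in Mx \<Otimes>\<^sub>M Mu. norm ((\<lambda>(x, u). H x u * F x u) z) \<le> norm ((\<lambda>(x, u). F x u) z)"
    using b by (intro AE_I2) (auto simp: space_pair_measure abs_mult intro!: mult_left_le_one_le)
qed

lemma Hbounds:
  fixes R :: real and g :: real
  assumes "R \<ge> 0" "g > 0"
  shows "\<bar>(1 / (1 + R)) powr (g / (g + 1))\<bar> \<le> 1"
    and "\<bar>(R / (1 + R)) powr (g / (g + 1))\<bar> \<le> 1"
    and "0 < (1 / (1 + R)) powr (g / (g + 1))"
    and "0 \<le> (R / (1 + R)) powr (g / (g + 1))"
  using assms by (auto intro!: powr_le1)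

lemma model_facts:
  assumes cm: "contam_model Mx Mu pu eps ps dl"
  shows "integrable (Mx \<Otimes>\<^sub>M Mu) (\<lambda>(x, u). pmarg Mu pu eps ps dl x * pu u)"
    and "integrable (Mx \<Otimes>\<^sub>M Mu) (\<lambda>(x, u). (1 - eps u) * (ps x u * pu u))"
    and "integrable (Mx \<Otimes>\<^sub>M Mu) (\<lambda>(x, u). eps u * (dl x u * pu u))"
    and "pmarg Mu pu eps ps dl \<in> borel_measurable Mx"
    and "\<forall>x\<in>space Mx. 0 \<le> pmarg Mu pu eps ps dl x"
proof -
  have sx: "sigma_finite_measure Mx" and su: "sigma_finite_measure Mu"
    and pd: "is_density Mu pu" and psd: "is_cond_density Mx Mu ps" and dld: "is_cond_density Mx Mu dl"
    and em[measurable]: "eps \<in> borel_measurable Mu" and eb: "\<forall>u\<in>space Mu. 0 \<le> eps u \<and> eps u < 1"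
    using cm by (auto simp: contam_model_def)
  interpret pair_sigma_finite Mx Mu using sx su by (simp add: pair_sigma_finite_def)
  have m1: "(\<lambda>(x, u). 1 - eps u) \<in> borel_measurable (Mx \<Otimes>\<^sub>M Mu)" by measurable
  have m2: "(\<lambda>(x, u). eps u) \<in> borel_measurable (Mx \<Otimes>\<^sub>M Mu)" by measurable
  have i2: "integrable (Mx \<Otimes>\<^sub>M Mu) (\<lambda>(x, u). (1 - eps u) * (ps x u * pu u))"
  proof -
    have "\<forall>x\<in>space Mx. \<forall>u\<in>space Mu. \<bar>1 - eps u\<bar> \<le> 1" using eb by auto
    from bf2[OF cond_integrable[OF sx su psd pd] m1 this] show ?thesis by simp
  qed
  have i3: "integrable (Mx \<Otimes>\<^sub>M Mu) (\<lambda>(x, u). eps u * (dl x u * pu u))"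
  proof -
    have "\<forall>x\<in>space Mx. \<forall>u\<in>space Mu. \<bar>eps u\<bar> \<le> 1" using eb by auto
    from bf2[OF cond_integrable[OF sx su dld pd] m2 this] show ?thesis by simp
  qed
  have ij: "integrable (Mx \<Otimes>\<^sub>M Mu) (\<lambda>(x, u). pjoint pu eps ps dl x u)"
    using Bochner_Integration.integrable_add[OF i2 i3] by (simp add: pjoint_def case_prod_beta')
  have ipm: "integrable Mx (pmarg Mu pu eps ps dl)"
    using integrable_fst'[OF ij] by (simp add: pmarg_def[abs_def])
  have pjn: "\<forall>x\<in>space Mx. \<forall>u\<in>space Mu. 0 \<le> pjoint pu eps ps dl x u"
    using eb psd dld pd by (auto simp: pjoint_def is_cond_density_def is_density_def)
  show pmn: "\<forall>x\<in>space Mx. 0 \<le> pmarg Mu pu eps ps dl x"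
    using pjn by (auto simp: pmarg_def intro!: integral_nonneg_AE AE_I2)
  show "pmarg Mu pu eps ps dl \<in> borel_measurable Mx" using ipm by auto
  show "integrable (Mx \<Otimes>\<^sub>M Mu) (\<lambda>(x, u). pmarg Mu pu eps ps dl x * pu u)"
    using prod_integrable[OF sx su ipm _ pmn] pd by (auto simp: is_density_def)
  show "integrable (Mx \<Otimes>\<^sub>M Mu) (\<lambda>(x, u). (1 - eps u) * (ps x u * pu u))" by (rule i2)
  show "integrable (Mx \<Otimes>\<^sub>M Mu) (\<lambda>(x, u). eps u * (dl x u * pu u))" by (rule i3)
qed


lemma int3:
  fixes f g h :: "'z \<Rightarrow> real"
  assumes "integrable M f" "integrable M g" "integrable M h"
  shows "(\<integral>z. 1/2 * f z + 1/2 * g z + 1/2 * h z \<partial>M)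
       = 1/2 * integral\<^sup>L M f + 1/2 * integral\<^sup>L M g + 1/2 * integral\<^sup>L M h"
  using assms by simp

lemma part1:
  fixes \<gamma> a :: real
  assumes g: "\<gamma> > 0" and a: "a > 0" and cm: "contam_model Mx Mu pu eps ps dl"
    and rm[measurable]: "(\<lambda>(x, u). r x u) \<in> borel_measurable (Mx \<Otimes>\<^sub>M Mu)"
    and rp: "\<forall>x\<in>space Mx. \<forall>u\<in>space Mu. 0 < r x u"
    and aJ: "a \<le> Jarg \<gamma> Mx Mu pu eps ps dl r"
  shows "\<bar>dgamma \<gamma> Mx Mu pu eps ps dl r - Jfun \<gamma> Mx Mu pu eps ps dl r\<bar>
           \<le> 1 / (2 * a * \<gamma>) * nu_contam \<gamma> Mx Mu pu eps dl r"
proof -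
  have sx: "sigma_finite_measure Mx" and su: "sigma_finite_measure Mu"
    and pd: "is_density Mu pu" and psd: "is_cond_density Mx Mu ps" and dld: "is_cond_density Mx Mu dl"
    and em[measurable]: "eps \<in> borel_measurable Mu" and eb: "\<forall>u\<in>space Mu. 0 \<le> eps u \<and> eps u < 1"
    using cm by (auto simp: contam_model_def)
  note mf = model_facts[OF cm]
  have pmm[measurable]: "pmarg Mu pu eps ps dl \<in> borel_measurable Mx" by (rule mf(4))
  have pun: "\<forall>u\<in>space Mu. 0 \<le> pu u" using pd by (simp add: is_density_def)
  have dln: "\<forall>x\<in>space Mx. \<forall>u\<in>space Mu. 0 \<le> dl x u" using dld by (simp add: is_cond_density_def)
  define P where "P = Mx \<Otimes>\<^sub>M Mu"
  define J1 where "J1 = (\<lambda>(x, u). (1 / (1 + r x u powr (\<gamma> + 1))) powr (\<gamma> / (\<gamma> + 1))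
         * (pmarg Mu pu eps ps dl x * pu u))"
  define J2 where "J2 = (\<lambda>(x, u). ((r x u powr (\<gamma> + 1)) / (1 + r x u powr (\<gamma> + 1))) powr (\<gamma> / (\<gamma> + 1))
         * ((1 - eps u) * (ps x u * pu u)))"
  define N where "N = (\<lambda>(x, u). ((r x u powr (\<gamma> + 1)) / (1 + r x u powr (\<gamma> + 1))) powr (\<gamma> / (\<gamma> + 1))
         * eps u * (dl x u * pu u))"
  have m0: "(\<lambda>(x, u). (1 / (1 + r x u powr (\<gamma> + 1))) powr (\<gamma> / (\<gamma> + 1))) \<in> borel_measurable (Mx \<Otimes>\<^sub>M Mu)"
    by measurable
  have m1: "(\<lambda>(x, u). ((r x u powr (\<gamma> + 1)) / (1 + r x u powr (\<gamma> + 1))) powr (\<gamma> / (\<gamma> + 1))) \<in> borel_measurable (Mx \<Otimes>\<^sub>M Mu)"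
    by measurable
  have m2: "(\<lambda>(x, u). ((r x u powr (\<gamma> + 1)) / (1 + r x u powr (\<gamma> + 1))) powr (\<gamma> / (\<gamma> + 1)) * eps u) \<in> borel_measurable (Mx \<Otimes>\<^sub>M Mu)"
    by measurable
  have b0: "\<forall>x\<in>space Mx. \<forall>u\<in>space Mu. \<bar>(1 / (1 + r x u powr (\<gamma> + 1))) powr (\<gamma> / (\<gamma> + 1))\<bar> \<le> 1"
    using Hbounds(1) g by simp
  have b1: "\<forall>x\<in>space Mx. \<forall>u\<in>space Mu. \<bar>((r x u powr (\<gamma> + 1)) / (1 + r x u powr (\<gamma> + 1))) powr (\<gamma> / (\<gamma> + 1))\<bar> \<le> 1"
    using Hbounds(2) g by simp
  have b2: "\<forall>x\<in>space Mx. \<forall>u\<in>space Mu. \<bar>((r x u powr (\<gamma> + 1)) / (1 + r x u powr (\<gamma> + 1))) powr (\<gamma> / (\<gamma> + 1)) * eps u\<bar> \<le> 1"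
  proof (intro ballI)
    fix x u assume x: "x \<in> space Mx" and u: "u \<in> space Mu"
    have "\<bar>((r x u powr (\<gamma> + 1)) / (1 + r x u powr (\<gamma> + 1))) powr (\<gamma> / (\<gamma> + 1))\<bar> \<le> 1"
      using b1 x u by blast
    moreover have "\<bar>eps u\<bar> \<le> 1" using eb u by auto
    ultimately show "\<bar>((r x u powr (\<gamma> + 1)) / (1 + r x u powr (\<gamma> + 1))) powr (\<gamma> / (\<gamma> + 1)) * eps u\<bar> \<le> 1"
      by (simp add: abs_mult mult_le_one)
  qed
  have iJ1: "integrable P J1" unfolding J1_def P_def by (rule bf2[OF mf(1) m0 b0])
  have iJ2: "integrable P J2" unfolding J2_def P_def by (rule bf2[OF mf(2) m1 b1])
  have iN: "integrable P N" unfolding N_def P_def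
    by (rule bf2[OF cond_integrable[OF sx su dld pd] m2 b2])
  have Jeq: "Jarg \<gamma> Mx Mu pu eps ps dl r = 1/2 * integral\<^sup>L P J1 + 1/2 * integral\<^sup>L P J2"
    unfolding Jarg_def J1_def J2_def P_def by simp
  have Neq: "nu_contam \<gamma> Mx Mu pu eps dl r = integral\<^sup>L P N"
    unfolding nu_contam_def N_def P_def by simp
  have rnz: "\<forall>x\<in>space Mx. \<forall>u\<in>space Mu. r x u \<noteq> 0" using rp by (metis less_irrefl)
  have Deq: "dgamma \<gamma> Mx Mu pu eps ps dl r
     = - (1/\<gamma>) * ln (\<integral>z. 1/2 * J1 z + 1/2 * J2 z + 1/2 * N z \<partial>P)"
    unfolding dgamma_def P_def[symmetric]
    apply (rule arg_cong[where f="\<lambda>t. - (1/\<gamma>) * ln t"])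
    apply (rule Bochner_Integration.integral_cong)
     apply (rule refl)
    using rnz by (auto simp: P_def space_pair_measure J1_def J2_def N_def pyxu_def pjoint_def field_simps)
  define I where "I = Jarg \<gamma> Mx Mu pu eps ps dl r"
  define n where "n = nu_contam \<gamma> Mx Mu pu eps dl r"
  have D2: "dgamma \<gamma> Mx Mu pu eps ps dl r = - (1/\<gamma>) * ln (I + n/2)"
    unfolding Deq int3[OF iJ1 iJ2 iN] I_def n_def Jeq Neq by simp
  have Jf: "Jfun \<gamma> Mx Mu pu eps ps dl r = - (1/\<gamma>) * ln I"
    by (simp add: Jfun_def I_def)
  have nn: "n \<ge> 0" unfolding n_def Neq
  proof (rule integral_nonneg_AE, rule AE_I2)
    fix z assume z: "z \<in> space P"
    then obtain x u where zz: "z = (x, u)" and x: "x \<in> space Mx" and u: "u \<in> space Mu"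
      by (auto simp: P_def space_pair_measure)
    show "0 \<le> N z" using eb x u pun dln Hbounds(4)[OF _ g, of "r x u powr (\<gamma> + 1)"]
      by (auto simp: zz N_def intro!: mult_nonneg_nonneg)
  qed
  have Ip: "I \<ge> a" using aJ by (simp add: I_def)
  have Ipos: "I > 0" using Ip a by linarith
  define L where "L = ln (1 + n / (2 * I))"
  have lnsplit: "ln (I + n/2) = ln I + L"
  proof -
    have "I + n/2 = I * (1 + n / (2 * I))" using Ipos by (simp add: field_simps)
    moreover have "1 + n / (2 * I) > 0" using Ipos nn by (simp add: add_pos_nonneg)
    ultimately show ?thesis using Ipos by (simp add: L_def ln_mult)
  qed
  have L0: "0 \<le> L" using nn Ipos by (simp add: L_def)
  have L1: "L \<le> n / (2 * I)" using nn Ipos unfolding L_def by (intro ln_add_one_self_le_self) simp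
  have L2: "n / (2 * I) \<le> n / (2 * a)" using nn a Ip by (intro divide_left_mono) auto
  have "\<bar>dgamma \<gamma> Mx Mu pu eps ps dl r - Jfun \<gamma> Mx Mu pu eps ps dl r\<bar> = L / \<gamma>"
  proof -
    have "dgamma \<gamma> Mx Mu pu eps ps dl r - Jfun \<gamma> Mx Mu pu eps ps dl r = - (1/\<gamma>) * (ln I + L) - (- (1/\<gamma>) * ln I)"
      by (simp only: D2 Jf lnsplit)
    also have "\<dots> = - (L / \<gamma>)" by (simp add: algebra_simps)
    finally show ?thesis using g L0 by simp
  qed
  also have "\<dots> \<le> (n / (2 * a)) / \<gamma>" using L1 L2 g by (intro divide_right_mono) auto
  also have "\<dots> = 1 / (2 * a * \<gamma>) * n" by simp
  finally show ?thesis by (simp add: n_def)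
qed


lemma AE_False_iff: "(AE x in M. False) \<longleftrightarrow> emeasure M (space M) = 0"
  by (rule AE_iff_measurable) auto

lemma null_integral:
  fixes f :: "'z \<Rightarrow> real"
  assumes "emeasure M (space M) = 0"
  shows "integral\<^sup>L M f = 0"
proof (rule integral_eq_zero_AE)
  have "AE x in M. False" using assms by (simp add: AE_False_iff)
  then show "AE x in M. f x = 0" by (rule eventually_mono) simp
qed

lemma part2:
  fixes \<gamma> :: real
  assumes g: "\<gamma> > 0" and cm: "contam_model Mx Mu pu eps ps dl"
    and pmp: "\<forall>x\<in>space Mx. 0 < pmarg Mu pu eps ps dl x"
    and pup: "\<forall>u\<in>space Mu. 0 < pu u"
    and rm[measurable]: "(\<lambda>(x, u). r x u) \<in> borel_measurable (Mx \<Otimes>\<^sub>M Mu)"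
    and rp: "\<forall>x\<in>space Mx. \<forall>u\<in>space Mu. 0 < r x u"
  shows "Jfun \<gamma> Mx Mu pu eps ps dl (rstar Mu pu eps ps dl) \<le> Jfun \<gamma> Mx Mu pu eps ps dl r"
proof -
  have sx: "sigma_finite_measure Mx" and su: "sigma_finite_measure Mu"
    and pd: "is_density Mu pu" and psd: "is_cond_density Mx Mu ps"
    and em[measurable]: "eps \<in> borel_measurable Mu" and eb: "\<forall>u\<in>space Mu. 0 \<le> eps u \<and> eps u < 1"
    using cm by (auto simp: contam_model_def)
  interpret pair_sigma_finite Mx Mu using sx su by (simp add: pair_sigma_finite_def)
  note mf = model_facts[OF cm]
  have pmm[measurable]: "pmarg Mu pu eps ps dl \<in> borel_measurable Mx" by (rule mf(4))
  have psm[measurable]: "(\<lambda>(x, u). ps x u) \<in> borel_measurable (Mx \<Otimes>\<^sub>M Mu)"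
    using psd by (simp add: is_cond_density_def)
  have psn: "\<forall>x\<in>space Mx. \<forall>u\<in>space Mu. 0 \<le> ps x u" using psd by (simp add: is_cond_density_def)
  have rsm[measurable]: "(\<lambda>(x, u). rstar Mu pu eps ps dl x u) \<in> borel_measurable (Mx \<Otimes>\<^sub>M Mu)"
    unfolding rstar_def by measurable
  define F where "F = (\<lambda>q. (\<lambda>(x, u). (1 / (1 + q x u powr (\<gamma> + 1))) powr (\<gamma> / (\<gamma> + 1))
         * (pmarg Mu pu eps ps dl x * pu u)
       + ((q x u powr (\<gamma> + 1)) / (1 + q x u powr (\<gamma> + 1))) powr (\<gamma> / (\<gamma> + 1))
         * ((1 - eps u) * (ps x u * pu u))))"
  have JF: "Jarg \<gamma> Mx Mu pu eps ps dl q = 1/2 * integral\<^sup>L (Mx \<Otimes>\<^sub>M Mu) (F q)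
          \<and> integrable (Mx \<Otimes>\<^sub>M Mu) (F q)"
    if qm[measurable]: "(\<lambda>(x, u). q x u) \<in> borel_measurable (Mx \<Otimes>\<^sub>M Mu)" for q
  proof -
    have m0: "(\<lambda>(x, u). (1 / (1 + q x u powr (\<gamma> + 1))) powr (\<gamma> / (\<gamma> + 1))) \<in> borel_measurable (Mx \<Otimes>\<^sub>M Mu)"
      by measurable
    have m1: "(\<lambda>(x, u). ((q x u powr (\<gamma> + 1)) / (1 + q x u powr (\<gamma> + 1))) powr (\<gamma> / (\<gamma> + 1))) \<in> borel_measurable (Mx \<Otimes>\<^sub>M Mu)"
      by measurable
    have b0: "\<forall>x\<in>space Mx. \<forall>u\<in>space Mu. \<bar>(1 / (1 + q x u powr (\<gamma> + 1))) powr (\<gamma> / (\<gamma> + 1))\<bar> \<le> 1"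
      using Hbounds(1) g by simp
    have b1: "\<forall>x\<in>space Mx. \<forall>u\<in>space Mu. \<bar>((q x u powr (\<gamma> + 1)) / (1 + q x u powr (\<gamma> + 1))) powr (\<gamma> / (\<gamma> + 1))\<bar> \<le> 1"
      using Hbounds(2) g by simp
    note i1 = bf2[OF mf(1) m0 b0] and i2 = bf2[OF mf(2) m1 b1]
    have "integral\<^sup>L (Mx \<Otimes>\<^sub>M Mu) (F q) = integral\<^sup>L (Mx \<Otimes>\<^sub>M Mu) (\<lambda>(x, u). (1 / (1 + q x u powr (\<gamma> + 1))) powr (\<gamma> / (\<gamma> + 1))
         * (pmarg Mu pu eps ps dl x * pu u))
       + integral\<^sup>L (Mx \<Otimes>\<^sub>M Mu) (\<lambda>(x, u). ((q x u powr (\<gamma> + 1)) / (1 + q x u powr (\<gamma> + 1))) powr (\<gamma> / (\<gamma> + 1))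
         * ((1 - eps u) * (ps x u * pu u)))"
      unfolding F_def using Bochner_Integration.integral_add[OF i1 i2] by (simp add: case_prod_beta')
    moreover have "integrable (Mx \<Otimes>\<^sub>M Mu) (F q)"
      unfolding F_def using Bochner_Integration.integrable_add[OF i1 i2] by (simp add: case_prod_beta')
    ultimately show ?thesis by (simp add: Jarg_def)
  qed
  have pw: "F r z \<le> F (rstar Mu pu eps ps dl) z" if z: "z \<in> space (Mx \<Otimes>\<^sub>M Mu)" for z
  proof -
    obtain x u where zz: "z = (x, u)" and x: "x \<in> space Mx" and u: "u \<in> space Mu"
      using z by (auto simp: space_pair_measure)
    define A where "A = pmarg Mu pu eps ps dl x * pu u"
    define B where "B = (1 - eps u) * (ps x u * pu u)"
    have Ap: "A > 0" using pmp pup x u by (simp add: A_def)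
    have Bn: "B \<ge> 0" using eb psn pup x u by (simp add: B_def less_imp_le)
    have puu: "pu u > 0" using pup u by blast
    have rs: "rstar Mu pu eps ps dl x u = B / A"
      using puu by (simp add: rstar_def A_def B_def)
    have "F r z \<le> (A powr (\<gamma> + 1) + B powr (\<gamma> + 1)) powr (1 / (\<gamma> + 1))"
      using pw_upper[OF g Ap Bn, of "r x u powr (\<gamma> + 1)"] by (simp add: F_def zz A_def B_def)
    also have "\<dots> = F (rstar Mu pu eps ps dl) z"
      using pw_star[OF g Ap Bn] by (simp add: F_def zz rs A_def[symmetric] B_def[symmetric])
    finally show ?thesis .
  qed
  have Fpos: "F r z > 0" if z: "z \<in> space (Mx \<Otimes>\<^sub>M Mu)" for z
  proof -
    obtain x u where zz: "z = (x, u)" and x: "x \<in> space Mx" and u: "u \<in> space Mu"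
      using z by (auto simp: space_pair_measure)
    have "0 < (1 / (1 + r x u powr (\<gamma> + 1))) powr (\<gamma> / (\<gamma> + 1)) * (pmarg Mu pu eps ps dl x * pu u)"
      using Hbounds(3)[OF _ g, of "r x u powr (\<gamma> + 1)"] pmp pup x u by simp
    moreover have "0 \<le> ((r x u powr (\<gamma> + 1)) / (1 + r x u powr (\<gamma> + 1))) powr (\<gamma> / (\<gamma> + 1))
         * ((1 - eps u) * (ps x u * pu u))"
      using Hbounds(4)[OF _ g, of "r x u powr (\<gamma> + 1)"] eb psn pup x u
      by (intro mult_nonneg_nonneg) (auto simp: less_imp_le)
    ultimately show ?thesis by (simp add: F_def zz)
  qed
  note JFr = JF[OF rm] and JFs = JF[OF rsm]
  have le: "Jarg \<gamma> Mx Mu pu eps ps dl r \<le> Jarg \<gamma> Mx Mu pu eps ps dl (rstar Mu pu eps ps dl)"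
  proof -
    have "integral\<^sup>L (Mx \<Otimes>\<^sub>M Mu) (F r) \<le> integral\<^sup>L (Mx \<Otimes>\<^sub>M Mu) (F (rstar Mu pu eps ps dl))"
      using JFr JFs pw by (intro Bochner_Integration.integral_mono) auto
    then show ?thesis using JFr JFs by linarith
  qed
  have nzu: "emeasure Mu (space Mu) \<noteq> 0"
  proof
    assume "emeasure Mu (space Mu) = 0"
    then have "integral\<^sup>L Mu pu = 0" by (rule null_integral)
    then show False using pd by (simp add: is_density_def)
  qed
  then obtain u0 where u0: "u0 \<in> space Mu" by fastforce
  have nzx: "emeasure Mx (space Mx) \<noteq> 0"
  proof
    assume "emeasure Mx (space Mx) = 0"
    then have "(\<integral>x. ps x u0 \<partial>Mx) = 0" by (rule null_integral)
    then show False using psd u0 by (simp add: is_cond_density_def)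
  qed
  have nzp: "emeasure (Mx \<Otimes>\<^sub>M Mu) (space (Mx \<Otimes>\<^sub>M Mu)) \<noteq> 0"
    using nzu nzx by (simp add: space_pair_measure M2.emeasure_pair_measure_Times)
  have pos: "0 < Jarg \<gamma> Mx Mu pu eps ps dl r"
  proof (rule ccontr)
    assume "\<not> 0 < Jarg \<gamma> Mx Mu pu eps ps dl r"
    then have le0: "integral\<^sup>L (Mx \<Otimes>\<^sub>M Mu) (F r) \<le> 0" using JFr by simp
    have ge0: "integral\<^sup>L (Mx \<Otimes>\<^sub>M Mu) (F r) \<ge> 0"
      using Fpos by (intro integral_nonneg_AE AE_I2) (simp add: less_imp_le)
    have "AE z in Mx \<Otimes>\<^sub>M Mu. F r z = 0"
      using le0 ge0 JFr Fpos by (subst integral_nonneg_eq_0_iff_AE[symmetric]) (auto intro!: AE_I2 less_imp_le)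
    moreover have "AE z in Mx \<Otimes>\<^sub>M Mu. F r z > 0" using Fpos by (intro AE_I2) simp
    ultimately have "AE z in Mx \<Otimes>\<^sub>M Mu. False" by eventually_elim simp
    then show False using nzp by (simp add: AE_False_iff)
  qed
  have "ln (Jarg \<gamma> Mx Mu pu eps ps dl r) \<le> ln (Jarg \<gamma> Mx Mu pu eps ps dl (rstar Mu pu eps ps dl))"
    using pos le by simp
  then show ?thesis
    using g by (simp add: Jfun_def divide_right_mono)
qed


theorem theorem2:
  fixes \<gamma> :: real
  assumes "\<gamma> > 0"
  shows "(\<forall>a>0. \<exists>C>0. \<exists>\<nu>0>0. \<forall>(Mx :: 'a measure) (Mu :: 'b measure) pu eps ps dl r.
            contam_model Mx Mu pu eps ps dl
            \<and> (\<lambda>(x, u). r x u) \<in> borel_measurable (Mx \<Otimes>\<^sub>M Mu)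
            \<and> (\<forall>x\<in>space Mx. \<forall>u\<in>space Mu. 0 < r x u)
            \<and> a \<le> Jarg \<gamma> Mx Mu pu eps ps dl r
            \<and> nu_contam \<gamma> Mx Mu pu eps dl r \<le> \<nu>0
            \<longrightarrow> \<bar>dgamma \<gamma> Mx Mu pu eps ps dl r - Jfun \<gamma> Mx Mu pu eps ps dl r\<bar>
                  \<le> C * nu_contam \<gamma> Mx Mu pu eps dl r)
       \<and> (\<forall>(Mx :: 'a measure) (Mu :: 'b measure) pu eps ps dl.
            contam_model Mx Mu pu eps ps dl
            \<and> (\<forall>x\<in>space Mx. 0 < pmarg Mu pu eps ps dl x)
            \<and> (\<forall>u\<in>space Mu. 0 < pu u)
            \<longrightarrow> (\<forall>r. (\<lambda>(x, u). r x u) \<in> borel_measurable (Mx \<Otimes>\<^sub>M Mu)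
                   \<and> (\<forall>x\<in>space Mx. \<forall>u\<in>space Mu. 0 < r x u)
                 \<longrightarrow> Jfun \<gamma> Mx Mu pu eps ps dl (rstar Mu pu eps ps dl)
                       \<le> Jfun \<gamma> Mx Mu pu eps ps dl r))"
proof (intro conjI allI impI)
  fix a :: real assume a: "a > 0"
  show "\<exists>C>0. \<exists>\<nu>0>0. \<forall>(Mx :: 'a measure) (Mu :: 'b measure) pu eps ps dl r.
            contam_model Mx Mu pu eps ps dl
            \<and> (\<lambda>(x, u). r x u) \<in> borel_measurable (Mx \<Otimes>\<^sub>M Mu)
            \<and> (\<forall>x\<in>space Mx. \<forall>u\<in>space Mu. 0 < r x u)
            \<and> a \<le> Jarg \<gamma> Mx Mu pu eps ps dl r
            \<and> nu_contam \<gamma> Mx Mu pu eps dl r \<le> \<nu>0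
            \<longrightarrow> \<bar>dgamma \<gamma> Mx Mu pu eps ps dl r - Jfun \<gamma> Mx Mu pu eps ps dl r\<bar>
                  \<le> C * nu_contam \<gamma> Mx Mu pu eps dl r"
    using part1[OF assms a] assms a
    by (intro exI[of _ "1 / (2 * a * \<gamma>)"] conjI exI[of _ 1]) auto
next
  fix Mx :: "'a measure" and Mu :: "'b measure" and pu eps ps dl and r :: "'a \<Rightarrow> 'b \<Rightarrow> real"
  assume h: "contam_model Mx Mu pu eps ps dl
            \<and> (\<forall>x\<in>space Mx. 0 < pmarg Mu pu eps ps dl x)
            \<and> (\<forall>u\<in>space Mu. 0 < pu u)"
    and hr: "(\<lambda>(x, u). r x u) \<in> borel_measurable (Mx \<Otimes>\<^sub>M Mu)
                   \<and> (\<forall>x\<in>space Mx. \<forall>u\<in>space Mu. 0 < r x u)"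
  show "Jfun \<gamma> Mx Mu pu eps ps dl (rstar Mu pu eps ps dl) \<le> Jfun \<gamma> Mx Mu pu eps ps dl r"
    using part2[OF assms] h hr by blast
qed

end
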